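(* For a hypergraph $H$ on a finite set $X$, let $\gamma(H)\in\mathrm{Bool}(X)$ be $\gamma(H)(A)=|\{Y\in E(H)\mid Y\subseteq A\}|$. Then: the map $H\mapsto\gamma(H)$ is injective; $\gamma(H)$ is rigid; for hypergraphs $G$ on $X$ and $H$ on $Y$ with $X\cap Y=\emptyset$, $\gamma(GH)=\gamma(G)\star_1\gamma(H)$, where $E(GH)=E(G)\sqcup E(H)$; for $X'\subseteq X$, $\gamma(H_{\mid X'})=\gamma(H)_{\mid X'}$ where $E(H_{\mid X'})=\{Y\in E(H)\mid Y\subseteq X'\}$; and $\gamma(H)$ is modular iff every hyperedge of $H$ has cardinality $1$.
   Context: A boolean function on a finite set $X$ is a map $f:\mathcal{P}(X)\to\mathbb{Z}$ with $f(\emptyset)=0$; $\mathrm{Bool}(X)$ is their set; $f_{\mid Y}$ is the restriction to $\mathcal{P}(Y)$. For disjoint $X,Y$, $(f\star_1g)(A)=f(A\cap X)+g(A\cap Y)$. $f$ is modular if $f(A)=\sum_{x\in A}f(\{x\})$ for all $A\subseteq X$. For nonempty $X$, $f$ is indecomposable if $f=f'\star_1f''$ with $f'\in\mathrm{Bool}(X\setminus Y)$, $f''\in\mathrm{Bool}(Y)$ forces $Y\in\{\emptyset,X\}$. Each $f$ decomposes uniquely as $f=\prod^{\star_1}_{Y}f_{\mid Y}$ over the classes $Y$ of an equivalence on $X$ with each $f_{\mid Y}$ indecomposable; these classes are the indecomposable components. An indecomposable $f$ is rigid if for all disjoint $A,B\subseteq X$ with $f(A\sqcup B)=f(A)+f(B)$,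 one has $f(A'\sqcup B')=f(A')+f(B')$ for all $A'\subseteq A$, $B'\subseteq B$; a general $f$ is rigid if $f_{\mid Y}$ is rigid for each indecomposable component $Y$. A hypergraph $H$ on $X$ is a set $E(H)$ of nonempty subsets of $X$ (hyperedges). *)

theory Defs
  imports Main
begin

(* A boolean function on X is represented as f :: 'a set => int; values on
   sets not contained in X are irrelevant and fixed to 0 (extensional convention). *)
definition Bool :: "'a set \<Rightarrow> ('a set \<Rightarrow> int) set" where
  "Bool X = {f. f {} = 0 \<and> (\<forall>A. \<not> A \<subseteq> X \<longrightarrow> f A = 0)}"

definition restr :: "('a set \<Rightarrow> int) \<Rightarrow> 'a set \<Rightarrow> ('a set \<Rightarrow> int)" where
  "restr f Y = (\<lambda>A. if A \<subseteq> Y then f A else 0)"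

definition star1 :: "'a set \<Rightarrow> 'a set \<Rightarrow> ('a set \<Rightarrow> int) \<Rightarrow> ('a set \<Rightarrow> int) \<Rightarrow> ('a set \<Rightarrow> int)" where
  "star1 X Y f g = (\<lambda>A. if A \<subseteq> X \<union> Y then f (A \<inter> X) + g (A \<inter> Y) else 0)"

definition modular :: "'a set \<Rightarrow> ('a set \<Rightarrow> int) \<Rightarrow> bool" where
  "modular X f \<longleftrightarrow> (\<forall>A. A \<subseteq> X \<longrightarrow> f A = (\<Sum>x\<in>A. f {x}))"

definition indecomposable :: "'a set \<Rightarrow> ('a set \<Rightarrow> int) \<Rightarrow> bool" where
  "indecomposable X f \<longleftrightarrow> X \<noteq> {} \<and>
     (\<forall>Y f' f''. Y \<subseteq> X \<and> f' \<in> Bool (X - Y) \<and> f'' \<in> Bool Y \<and>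
        f = star1 (X - Y) Y f' f'' \<longrightarrow> Y = {} \<or> Y = X)"

definition indec_decomposition :: "'a set \<Rightarrow> ('a set \<Rightarrow> int) \<Rightarrow> 'a set set \<Rightarrow> bool" where
  "indec_decomposition X f P \<longleftrightarrow>
     \<Union>P = X \<and> {} \<notin> P \<and> (\<forall>Y\<in>P. \<forall>Z\<in>P. Y \<noteq> Z \<longrightarrow> Y \<inter> Z = {}) \<and>
     (\<forall>A. A \<subseteq> X \<longrightarrow> f A = (\<Sum>Y\<in>P. f (A \<inter> Y))) \<and>
     (\<forall>Y\<in>P. indecomposable Y (restr f Y))"

definition rigid_indec :: "'a set \<Rightarrow> ('a set \<Rightarrow> int) \<Rightarrow> bool" where
  "rigid_indec X f \<longleftrightarrow>
     (\<forall>A B. A \<subseteq> X \<and> B \<subseteq> X \<and> A \<inter> B = {} \<and> f (A \<union> B) = f A + f B \<longrightarrow>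
        (\<forall>A' B'. A' \<subseteq> A \<and> B' \<subseteq> B \<longrightarrow> f (A' \<union> B') = f A' + f B'))"

definition rigid :: "'a set \<Rightarrow> ('a set \<Rightarrow> int) \<Rightarrow> bool" where
  "rigid X f \<longleftrightarrow> (\<exists>P. indec_decomposition X f P \<and> (\<forall>Y\<in>P. rigid_indec Y (restr f Y)))"

definition hypergraph :: "'a set \<Rightarrow> 'a set set \<Rightarrow> bool" where
  "hypergraph X E \<longleftrightarrow> (\<forall>e\<in>E. e \<noteq> {} \<and> e \<subseteq> X)"

definition gamma :: "'a set \<Rightarrow> 'a set set \<Rightarrow> ('a set \<Rightarrow> int)" where
  "gamma X E = (\<lambda>A. if A \<subseteq> X then int (card {Y\<in>E. Y \<subseteq> A}) else 0)"

end

theory Submission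
  imports Defs
begin

lemma finH: "finite X \<Longrightarrow> hypergraph X H \<Longrightarrow> finite H"
proof -
  assume "finite X" "hypergraph X H"
  then have "H \<subseteq> Pow X" unfolding hypergraph_def by blast
  then show "finite H" using \<open>finite X\<close> by (simp add: finite_subset)
qed

lemma cross:
  assumes fin: "finite X" and hg: "hypergraph X H" and AB: "A \<union> B \<subseteq> X" "A \<inter> B = {}"
  shows "gamma X H (A \<union> B) = gamma X H A + gamma X H B
     + int (card {e\<in>H. e \<subseteq> A \<union> B \<and> \<not> e \<subseteq> A \<and> \<not> e \<subseteq> B})"
proof -
  have fH: "finite H" using finH[OF fin hg] .
  let ?S1 = "{e\<in>H. e \<subseteq> A}" and ?S2 = "{e\<in>H. e \<subseteq> B}"
    and ?C = "{e\<in>H. e \<subseteq> A \<union> B \<and> \<not> e \<subseteq> A \<and> \<not> e \<subseteq> B}"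
  have eq: "{e\<in>H. e \<subseteq> A \<union> B} = (?S1 \<union> ?S2) \<union> ?C" by blast
  have ne: "\<forall>e\<in>H. e \<noteq> {}" using hg unfolding hypergraph_def by blast
  have d1: "?S1 \<inter> ?S2 = {}"
  proof (rule ccontr)
    assume "?S1 \<inter> ?S2 \<noteq> {}"
    then obtain e where "e \<in> H" "e \<subseteq> A" "e \<subseteq> B" by blast
    then have "e = {}" using AB(2) by blast
    then show False using ne \<open>e \<in> H\<close> by blast
  qed
  have d2: "(?S1 \<union> ?S2) \<inter> ?C = {}" by blast
  have f1: "finite ?S1" "finite ?S2" "finite ?C" using fH by simp_all
  have c1: "card (?S1 \<union> ?S2) = card ?S1 + card ?S2" using card_Un_disjoint[OF f1(1,2) d1] .
  have c2: "card ((?S1 \<union> ?S2) \<union> ?C) = card (?S1 \<union> ?S2) + card ?C"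
    using card_Un_disjoint[OF _ f1(3) d2] f1 by blast
  have "card {e\<in>H. e \<subseteq> A \<union> B} = card ?S1 + card ?S2 + card ?C"
    unfolding eq c2 c1 ..
  moreover have "A \<subseteq> X" "B \<subseteq> X" using AB by blast+
  ultimately show ?thesis using AB unfolding gamma_def by simp
qed

lemma cnt_lemma:
  fixes F :: "'a set set"
  assumes fe: "finite e"
  shows "card {Y\<in>F. Y \<subseteq> e} = card {Y\<in>F. Y \<subset> e} + (if e \<in> F then 1 else 0)"
proof -
  have fin2: "finite {Y\<in>F. Y \<subset> e}"
    by (rule finite_subset[of _ "Pow e"]) (use fe in auto)
  show ?thesis
  proof (cases "e \<in> F")
    case True
    then have "{Y\<in>F. Y \<subseteq> e} = insert e {Y\<in>F. Y \<subset> e}" by blast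
    moreover have "e \<notin> {Y\<in>F. Y \<subset> e}" by blast
    ultimately show ?thesis using True fin2 by simp
  next
    case False
    then have "{Y\<in>F. Y \<subseteq> e} = {Y\<in>F. Y \<subset> e}" by blast
    then show ?thesis using False by simp
  qed
qed

lemma inj_gamma:
  fixes E E' :: "'a set set"
  assumes fin: "finite X" and h1: "hypergraph X E" and h2: "hypergraph X E'"
    and eq: "gamma X E = gamma X E'"
  shows "E = E'"
proof -
  have key: "\<forall>e::'a set. card e = n \<longrightarrow> (e \<in> E \<longleftrightarrow> e \<in> E')" for n
  proof (induction n rule: less_induct)
    case (less n)
    show ?case
    proof (intro allI impI)
      fix e :: "'a set" assume ce: "card e = n"
      show "e \<in> E \<longleftrightarrow> e \<in> E'"
      proof (cases "e \<subseteq> X")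
        case False then show ?thesis using h1 h2 unfolding hypergraph_def by blast
      next
        case True
        have fe: "finite e" using True fin finite_subset by blast
        have ps: "{Y\<in>E. Y \<subset> e} = {Y\<in>E'. Y \<subset> e}"
        proof -
          have "Y \<in> E \<longleftrightarrow> Y \<in> E'" if "Y \<subset> e" for Y
          proof -
            have "card Y < n" using psubset_card_mono[OF fe that] ce by simp
            then have "\<forall>e::'a set. card e = card Y \<longrightarrow> (e \<in> E \<longleftrightarrow> e \<in> E')" by (rule less.IH)
            then show ?thesis by blast
          qed
          then show ?thesis by blast
        qed
        have "gamma X E e = gamma X E' e" using eq by simp
        then have "card {Y\<in>E. Y \<subseteq> e} = card {Y\<in>E'. Y \<subseteq> e}"
          using True unfolding gamma_def by simp
        then have "card {Y\<in>E'. Y \<subset> e} + (if e \<in> E then 1 else 0) = card {Y\<in>E'. Y \<subset> e} + (if e \<in> E' then 1 else 0)"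
          unfolding cnt_lemma[OF fe, of E] cnt_lemma[OF fe, of E'] ps .
        then have "(if e \<in> E then 1 else 0) = (if e \<in> E' then (1::nat) else 0)" by linarith
        then show ?thesis by (cases "e \<in> E"; cases "e \<in> E'") auto
      qed
    qed
  qed
  show ?thesis using key by blast
qed

lemma restr_eq: "C \<subseteq> Y \<Longrightarrow> restr f Y C = f C"
  unfolding restr_def by simp

lemma rigid_any:
  assumes fin: "finite X" and hg: "hypergraph X H" and Y: "Y \<subseteq> X"
  shows "rigid_indec Y (restr (gamma X H) Y)"
  unfolding rigid_indec_def
proof (intro allI impI, elim conjE)
  fix A B A' B'
  assume A: "A \<subseteq> Y" and B: "B \<subseteq> Y" and d: "A \<inter> B = {}"
    and e: "restr (gamma X H) Y (A \<union> B) = restr (gamma X H) Y A + restr (gamma X H) Y B"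
    and A': "A' \<subseteq> A" and B': "B' \<subseteq> B"
  have fH: "finite H" using finH[OF fin hg] .
  have AB: "A \<union> B \<subseteq> Y" using A B by (rule Un_least)
  have "gamma X H (A \<union> B) = gamma X H A + gamma X H B"
    using e unfolding restr_eq[OF AB] restr_eq[OF A] restr_eq[OF B] .
  moreover have ABX: "A \<union> B \<subseteq> X" using A B Y by blast
  note cr = cross[OF fin hg ABX d]
  ultimately have "int (card {e\<in>H. e \<subseteq> A \<union> B \<and> \<not> e \<subseteq> A \<and> \<not> e \<subseteq> B}) = 0"
    by linarith
  then have "card {e\<in>H. e \<subseteq> A \<union> B \<and> \<not> e \<subseteq> A \<and> \<not> e \<subseteq> B} = 0" by (rule of_nat_eq_0_iff[THEN iffD1])
  then have em: "{e\<in>H. e \<subseteq> A \<union> B \<and> \<not> e \<subseteq> A \<and> \<not> e \<subseteq> B} = {}" using fH by simp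
  have "{e\<in>H. e \<subseteq> A' \<union> B' \<and> \<not> e \<subseteq> A' \<and> \<not> e \<subseteq> B'} \<subseteq>
        {e\<in>H. e \<subseteq> A \<union> B \<and> \<not> e \<subseteq> A \<and> \<not> e \<subseteq> B}"
  proof
    fix e assume "e \<in> {e\<in>H. e \<subseteq> A' \<union> B' \<and> \<not> e \<subseteq> A' \<and> \<not> e \<subseteq> B'}"
    then have eH: "e \<in> H" and e1: "e \<subseteq> A' \<union> B'" and e2: "\<not> e \<subseteq> A'" and e3: "\<not> e \<subseteq> B'"
      by simp_all
    have u: "A' \<union> B' \<subseteq> A \<union> B" using A' B' by (rule Un_mono)
    have i1: "A \<inter> B' = {}" using B' d by blast
    have i2: "B \<inter> A' = {}" using A' d by blast
    have n1: "\<not> e \<subseteq> A"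
    proof
      assume "e \<subseteq> A"
      then have "e \<subseteq> A'" using e1 i1 by blast
      then show False using e2 by contradiction
    qed
    have n2: "\<not> e \<subseteq> B"
    proof
      assume "e \<subseteq> B"
      then have "e \<subseteq> B'" using e1 i2 by blast
      then show False using e3 by contradiction
    qed
    show "e \<in> {e\<in>H. e \<subseteq> A \<union> B \<and> \<not> e \<subseteq> A \<and> \<not> e \<subseteq> B}"
      using eH e1 u n1 n2 by blast
  qed
  then have em2: "{e\<in>H. e \<subseteq> A' \<union> B' \<and> \<not> e \<subseteq> A' \<and> \<not> e \<subseteq> B'} = {}"
    unfolding em by (rule subset_empty[THEN iffD1])
  have "A' \<inter> B' \<subseteq> A \<inter> B" using A' B' by (rule Int_mono)
  then have d': "A' \<inter> B' = {}" unfolding d by (rule subset_empty[THEN iffD1])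
  have g: "gamma X H (A' \<union> B') = gamma X H A' + gamma X H B'"
  proof -
    have "A' \<union> B' \<subseteq> X" using A B A' B' Y by blast
    from cross[OF fin hg this d'] show ?thesis unfolding em2 by simp
  qed
  have s: "A' \<union> B' \<subseteq> Y" "A' \<subseteq> Y" "B' \<subseteq> Y" using A B A' B' by blast+
  show "restr (gamma X H) Y (A' \<union> B') = restr (gamma X H) Y A' + restr (gamma X H) Y B'"
    unfolding restr_eq[OF s(1)] restr_eq[OF s(2)] restr_eq[OF s(3)] by (rule g)
qed

definition valid :: "'a set \<Rightarrow> 'a set set \<Rightarrow> 'a set set \<Rightarrow> bool" where
  "valid X H P \<longleftrightarrow> \<Union>P = X \<and> {} \<notin> P \<and> (\<forall>Y\<in>P. \<forall>Z\<in>P. Y \<noteq> Z \<longrightarrow> Y \<inter> Z = {})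
     \<and> (\<forall>e\<in>H. \<exists>Y\<in>P. e \<subseteq> Y)"

lemma valid_sum:
  assumes fin: "finite X" and hg: "hypergraph X H" and v: "valid X H P" and A: "A \<subseteq> X"
  shows "gamma X H A = (\<Sum>Y\<in>P. gamma X H (A \<inter> Y))"
proof -
  have fH: "finite H" using finH[OF fin hg] .
  have UP: "\<Union>P = X" and cov: "\<forall>e\<in>H. \<exists>Y\<in>P. e \<subseteq> Y"
    and dj: "\<forall>Y\<in>P. \<forall>Z\<in>P. Y \<noteq> Z \<longrightarrow> Y \<inter> Z = {}"
    using v unfolding valid_def by simp_all
  have fP: "finite P" using fin UP by (metis finite_UnionD)
  have ne: "\<forall>e\<in>H. e \<noteq> {}" using hg unfolding hypergraph_def by simp
  have eq: "{e\<in>H. e \<subseteq> A} = (\<Union>Y\<in>P. {e\<in>H. e \<subseteq> A \<inter> Y})"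
  proof (rule set_eqI, rule iffI)
    fix e assume "e \<in> {e\<in>H. e \<subseteq> A}"
    then have eH: "e \<in> H" and eA: "e \<subseteq> A" by simp_all
    from cov eH obtain Y where "Y \<in> P" "e \<subseteq> Y" by blast
    then show "e \<in> (\<Union>Y\<in>P. {e\<in>H. e \<subseteq> A \<inter> Y})" using eH eA by blast
  next
    fix e assume "e \<in> (\<Union>Y\<in>P. {e\<in>H. e \<subseteq> A \<inter> Y})"
    then show "e \<in> {e\<in>H. e \<subseteq> A}" by blast
  qed
  have disj: "\<forall>Y\<in>P. \<forall>W\<in>P. Y \<noteq> W \<longrightarrow> {e\<in>H. e \<subseteq> A \<inter> Y} \<inter> {e\<in>H. e \<subseteq> A \<inter> W} = {}"
  proof (intro ballI impI)
    fix Y W assume Y: "Y \<in> P" and W: "W \<in> P" and YW: "Y \<noteq> W"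
    have YW0: "Y \<inter> W = {}" using dj Y W YW by blast
    show "{e\<in>H. e \<subseteq> A \<inter> Y} \<inter> {e\<in>H. e \<subseteq> A \<inter> W} = {}"
    proof (rule equals0I)
      fix e assume "e \<in> {e\<in>H. e \<subseteq> A \<inter> Y} \<inter> {e\<in>H. e \<subseteq> A \<inter> W}"
      then have "e \<in> H" "e \<subseteq> Y \<inter> W" by auto
      then show False using YW0 ne by auto
    qed
  qed
  have fin3: "\<forall>Y\<in>P. finite {e\<in>H. e \<subseteq> A \<inter> Y}" using fH by simp
  have "card {e\<in>H. e \<subseteq> A} = (\<Sum>Y\<in>P. card {e\<in>H. e \<subseteq> A \<inter> Y})"
    unfolding eq by (rule card_UN_disjoint[OF fP]) (use fin3 disj in blast)+
  moreover have "gamma X H (A \<inter> Y) = int (card {e\<in>H. e \<subseteq> A \<inter> Y})" for Y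
    using A unfolding gamma_def by auto
  moreover have "gamma X H A = int (card {e\<in>H. e \<subseteq> A})" using A unfolding gamma_def by simp
  ultimately show ?thesis by simp
qed

lemma no_cross:
  assumes fin: "finite X" and hg: "hypergraph X H" and Y: "Y \<subseteq> X" and Z: "Z \<subseteq> Y"
    and f': "f' \<in> Bool (Y - Z)" and f'': "f'' \<in> Bool Z"
    and h: "restr (gamma X H) Y = star1 (Y - Z) Z f' f''"
    and e: "e \<in> H" "e \<subseteq> Y"
  shows "e \<subseteq> Y - Z \<or> e \<subseteq> Z"
proof (rule ccontr)
  assume nc: "\<not> (e \<subseteq> Y - Z \<or> e \<subseteq> Z)"
  let ?f = "gamma X H"
  have U: "(Y - Z) \<union> Z = Y" using Z by blast
  have gen: "?f A = f' (A \<inter> (Y - Z)) + f'' (A \<inter> Z)" if "A \<subseteq> Y" for A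
  proof -
    have "restr ?f Y A = star1 (Y - Z) Z f' f'' A" using h by simp
    then show ?thesis using that U unfolding restr_def star1_def by simp
  qed
  have f0: "f' {} = 0" "f'' {} = 0" using f' f'' unfolding Bool_def by auto
  have i1: "e \<inter> (Y - Z) \<inter> Z = {}" "e \<inter> (Y - Z) \<inter> (Y - Z) = e \<inter> (Y - Z)"
    "e \<inter> Z \<inter> (Y - Z) = {}" "e \<inter> Z \<inter> Z = e \<inter> Z" by blast+
  have s1: "e \<inter> (Y - Z) \<subseteq> Y" "e \<inter> Z \<subseteq> Y" using Z by blast+
  have g1: "?f (e \<inter> (Y - Z)) = f' (e \<inter> (Y - Z))"
    using gen[OF s1(1)] f0 i1 by simp
  have g2: "?f (e \<inter> Z) = f'' (e \<inter> Z)"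
    using gen[OF s1(2)] f0 i1 by simp
  have "?f e = ?f (e \<inter> (Y - Z)) + ?f (e \<inter> Z)" using gen[OF e(2)] g1 g2 by simp
  moreover have eu: "e = (e \<inter> (Y - Z)) \<union> (e \<inter> Z)" using e Z by blast
  have "?f ((e \<inter> (Y - Z)) \<union> (e \<inter> Z)) = ?f (e \<inter> (Y - Z)) + ?f (e \<inter> Z) +
     int (card {e'\<in>H. e' \<subseteq> (e \<inter> (Y - Z)) \<union> (e \<inter> Z) \<and> \<not> e' \<subseteq> e \<inter> (Y - Z) \<and> \<not> e' \<subseteq> e \<inter> Z})"
    by (rule cross[OF fin hg]) (use e Y in auto)
  ultimately have "card {e'\<in>H. e' \<subseteq> (e \<inter> (Y - Z)) \<union> (e \<inter> Z) \<and> \<not> e' \<subseteq> e \<inter> (Y - Z) \<and> \<not> e' \<subseteq> e \<inter> Z} = 0"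
    using eu by simp
  moreover have "finite H" using finH[OF fin hg] .
  ultimately have "{e'\<in>H. e' \<subseteq> (e \<inter> (Y - Z)) \<union> (e \<inter> Z) \<and> \<not> e' \<subseteq> e \<inter> (Y - Z) \<and> \<not> e' \<subseteq> e \<inter> Z} = {}"
    by simp
  moreover have "e \<in> {e'\<in>H. e' \<subseteq> (e \<inter> (Y - Z)) \<union> (e \<inter> Z) \<and> \<not> e' \<subseteq> e \<inter> (Y - Z) \<and> \<not> e' \<subseteq> e \<inter> Z}"
    using e nc by auto
  ultimately show False by blast
qed


lemma exists_decomp:
  assumes fin: "finite X" and hg: "hypergraph X H"
  shows "rigid X (gamma X H)"
proof -
  let ?f = "gamma X H"
  let ?S = "{P. valid X H P}"
  have Ssub: "?S \<subseteq> Pow (Pow X)" unfolding valid_def by blast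
  have fS: "finite ?S" by (rule finite_subset[OF Ssub]) (simp add: fin)
  have "valid X H (if X = {} then {} else {X})"
    using hg unfolding valid_def hypergraph_def by auto
  then have neS: "?S \<noteq> {}" by blast
  define m where "m = Max (card ` ?S)"
  have "m \<in> card ` ?S" unfolding m_def using fS neS by (intro Max_in) auto
  then obtain P where vP: "valid X H P" and cP: "card P = m" by blast
  have maxP: "card Q \<le> card P" if "valid X H Q" for Q
    unfolding cP m_def using fS that by (intro Max_ge) auto
  have fP: "finite P" using vP fin unfolding valid_def by (simp add: finite_UnionD)
  have indec: "indecomposable Y (restr ?f Y)" if Y: "Y \<in> P" for Y
    unfolding indecomposable_def
  proof (intro conjI allI impI)
    show "Y \<noteq> {}" using vP Y unfolding valid_def by blast
  next
    fix Z f' f''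
    assume a: "Z \<subseteq> Y \<and> f' \<in> Bool (Y - Z) \<and> f'' \<in> Bool Z \<and> restr ?f Y = star1 (Y - Z) Z f' f''"
    show "Z = {} \<or> Z = Y"
    proof (rule ccontr)
      assume nt: "\<not> (Z = {} \<or> Z = Y)"
      have YX: "Y \<subseteq> X" using vP Y unfolding valid_def by blast
      have Zs: "Z \<subseteq> Y" using a by blast
      have nc: "e \<subseteq> Y - Z \<or> e \<subseteq> Z" if "e \<in> H" "e \<subseteq> Y" for e
        using no_cross[OF fin hg YX Zs _ _ _ that] a by blast
      define Q where "Q = insert (Y - Z) (insert Z (P - {Y}))"
      have ne1: "Y - Z \<noteq> {}" "Z \<noteq> {}" using nt Zs by blast+
      have disjP: "\<forall>U\<in>P. \<forall>W\<in>P. U \<noteq> W \<longrightarrow> U \<inter> W = {}" and nemp: "{} \<notin> P"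
        using vP unfolding valid_def by blast+
      have n1: "Y - Z \<notin> insert Z (P - {Y})"
      proof
        assume "Y - Z \<in> insert Z (P - {Y})"
        then show False
        proof
          assume "Y - Z = Z"
          then have "Z \<subseteq> Y - Z" by simp
          then have "Z = {}" by blast
          then show False using ne1 by simp
        next
          assume "Y - Z \<in> P - {Y}"
          then have h: "Y - Z \<in> P" "Y - Z \<noteq> Y" by simp_all
          have "(Y - Z) \<inter> Y = {}" using disjP h(1) Y h(2) by simp
          moreover have "(Y - Z) \<inter> Y = Y - Z" by (rule Int_absorb2) (rule Diff_subset)
          ultimately show False using ne1 by simp
        qed
      qed
      have n2: "Z \<notin> P - {Y}"
      proof
        assume "Z \<in> P - {Y}"
        then have h: "Z \<in> P" "Z \<noteq> Y" by simp_all
        have "Z \<inter> Y = {}" using disjP h(1) Y h(2) by simp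
        moreover have "Z \<inter> Y = Z" using Zs by (rule Int_absorb2)
        ultimately show False using ne1 by simp
      qed
      have fPY: "finite (P - {Y})" using fP by (rule finite_Diff)
      have c1: "card (insert Z (P - {Y})) = Suc (card (P - {Y}))"
        by (rule card_insert_disjoint[OF fPY n2])
      have c2: "card Q = Suc (card (insert Z (P - {Y})))"
        unfolding Q_def by (rule card_insert_disjoint[OF finite_insert[THEN iffD2, OF fPY] n1])
      have c3: "card (P - {Y}) = card P - 1" by (rule card_Diff_singleton[OF Y])
      have c4: "card P > 0" using fP Y card_gt_0_iff by blast
      have "card Q = card P + 1" using c1 c2 c3 c4 by linarith
      moreover have "valid X H Q"
        unfolding valid_def
      proof (intro conjI)
        have UP: "\<Union>P = X" using vP unfolding valid_def by simp
        have "\<Union> Q = (Y - Z) \<union> (Z \<union> \<Union>(P - {Y}))" unfolding Q_def by simp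
        also have "\<dots> = Y \<union> \<Union>(P - {Y})" using Zs by blast
        also have "\<dots> = \<Union>P" using Y by blast
        finally show "\<Union> Q = X" using UP by simp
        show "{} \<notin> Q" using ne1 nemp unfolding Q_def by blast
        show "\<forall>U\<in>Q. \<forall>W\<in>Q. U \<noteq> W \<longrightarrow> U \<inter> W = {}"
        proof (intro ballI impI)
          fix U W assume U: "U \<in> Q" and W: "W \<in> Q" and UW: "U \<noteq> W"
          have gen: "U \<inter> W = {}" if "U \<subseteq> Y" "W \<in> P - {Y}" for U W
          proof -
            have "W \<in> P" "Y \<noteq> W" using that(2) by auto
            then have "Y \<inter> W = {}" using disjP Y by simp
            then show ?thesis using that(1) by blast
          qed
          have q: "V \<in> Q \<longleftrightarrow> V = Y - Z \<or> V = Z \<or> V \<in> P - {Y}" for V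
            unfolding Q_def by simp
          have yz: "(Y - Z) \<inter> Z = {}" "Z \<inter> (Y - Z) = {}" by blast+
          have sY: "Y - Z \<subseteq> Y" "Z \<subseteq> Y" using Zs by blast+
          show "U \<inter> W = {}"
          proof (cases "U \<in> P - {Y}")
            case Ua: True
            show ?thesis
            proof (cases "W \<in> P - {Y}")
              case True then show ?thesis using Ua UW disjP by simp
            next
              case False
              then have "W \<subseteq> Y" using W q sY by auto
              then show ?thesis using gen[OF _ Ua] by blast
            qed
          next
            case Ub: False
            then have UY: "U = Y - Z \<or> U = Z" using U q by blast
            show ?thesis
            proof (cases "W \<in> P - {Y}")
              case True then show ?thesis using gen[OF _ True] UY sY by blast
            next
              case False
              then have "W = Y - Z \<or> W = Z" using W q by blast
              then show ?thesis using UY UW yz by blast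
            qed
          qed
        qed
        show "\<forall>e\<in>H. \<exists>U\<in>Q. e \<subseteq> U"
        proof
          fix e assume e: "e \<in> H"
          then obtain W where W: "W \<in> P" "e \<subseteq> W" using vP unfolding valid_def by blast
          show "\<exists>U\<in>Q. e \<subseteq> U"
          proof (cases "W = Y")
            case True then show ?thesis using nc[OF e] W unfolding Q_def by blast
          next
            case False then show ?thesis using W unfolding Q_def by blast
          qed
        qed
      qed
      ultimately show False using maxP[of Q] by linarith
    qed
  qed
  have "indec_decomposition X ?f P"
    unfolding indec_decomposition_def
  proof (intro conjI ballI allI impI)
    show "\<Union> P = X" "{} \<notin> P" using vP unfolding valid_def by blast+
  next
    fix U W assume "U \<in> P" "W \<in> P" "U \<noteq> W" then show "U \<inter> W = {}"
      using vP unfolding valid_def by blast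
  next
    fix A assume "A \<subseteq> X" then show "?f A = (\<Sum>Y\<in>P. ?f (A \<inter> Y))"
      by (rule valid_sum[OF fin hg vP])
  next
    fix Y assume "Y \<in> P" then show "indecomposable Y (restr ?f Y)" by (rule indec)
  qed
  moreover have "\<forall>Y\<in>P. rigid_indec Y (restr ?f Y)"
  proof
    fix Y assume Y: "Y \<in> P"
    have "\<Union>P = X" using vP unfolding valid_def by simp
    then have "Y \<subseteq> X" using Y by blast
    then show "rigid_indec Y (restr ?f Y)" by (rule rigid_any[OF fin hg])
  qed
  ultimately show ?thesis unfolding rigid_def by (intro exI conjI)
qed

lemma bool_part:
  assumes hg: "hypergraph X H"
  shows "gamma X H \<in> Bool X"
proof -
  have "{e\<in>H. e \<subseteq> {}} = {}" using hg unfolding hypergraph_def by auto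
  then show ?thesis unfolding Bool_def gamma_def by simp
qed

lemma star_part:
  assumes fX: "finite X" and fY: "finite Y" and d: "X \<inter> Y = {}"
    and hG: "hypergraph X G" and hK: "hypergraph Y K"
  shows "gamma (X \<union> Y) (G \<union> K) = star1 X Y (gamma X G) (gamma Y K)"
proof
  fix A
  show "gamma (X \<union> Y) (G \<union> K) A = star1 X Y (gamma X G) (gamma Y K) A"
  proof (cases "A \<subseteq> X \<union> Y")
    case False then show ?thesis unfolding gamma_def star1_def by simp
  next
    case True
    have fG: "finite G" using finH[OF fX hG] .
    have fK: "finite K" using finH[OF fY hK] .
    have G: "\<forall>e\<in>G. e \<noteq> {} \<and> e \<subseteq> X" using hG unfolding hypergraph_def .
    have K: "\<forall>e\<in>K. e \<noteq> {} \<and> e \<subseteq> Y" using hK unfolding hypergraph_def .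
    have e1: "{e\<in>G \<union> K. e \<subseteq> A} = {e\<in>G. e \<subseteq> A \<inter> X} \<union> {e\<in>K. e \<subseteq> A \<inter> Y}"
      using G K by blast
    have e2: "{e\<in>G. e \<subseteq> A \<inter> X} \<inter> {e\<in>K. e \<subseteq> A \<inter> Y} = {}"
    proof (rule equals0I)
      fix e assume "e \<in> {e\<in>G. e \<subseteq> A \<inter> X} \<inter> {e\<in>K. e \<subseteq> A \<inter> Y}"
      then have "e \<in> G" "e \<subseteq> X \<inter> Y" by auto
      then show False using G d by auto
    qed
    have "card {e\<in>G \<union> K. e \<subseteq> A} = card {e\<in>G. e \<subseteq> A \<inter> X} + card {e\<in>K. e \<subseteq> A \<inter> Y}"
      unfolding e1 by (rule card_Un_disjoint) (use fG fK e2 in simp_all)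
    then show ?thesis using True unfolding gamma_def star1_def by simp
  qed
qed

lemma restr_part:
  assumes "X' \<subseteq> X"
  shows "gamma X' {e\<in>H. e \<subseteq> X'} = restr (gamma X H) X'"
proof
  fix A
  show "gamma X' {e\<in>H. e \<subseteq> X'} A = restr (gamma X H) X' A"
  proof (cases "A \<subseteq> X'")
    case False then show ?thesis unfolding gamma_def restr_def by simp
  next
    case True
    then have "A \<subseteq> X" using assms by blast
    moreover have "{e \<in> {e\<in>H. e \<subseteq> X'}. e \<subseteq> A} = {e\<in>H. e \<subseteq> A}" using True by blast
    ultimately show ?thesis using True unfolding gamma_def restr_def by simp
  qed
qed

lemma single_sum:
  assumes fin: "finite X" and hg: "hypergraph X H" and A: "A \<subseteq> X"
  shows "(\<Sum>x\<in>A. gamma X H {x}) = int (card {e\<in>H. e \<subseteq> A \<and> card e = 1})"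
proof -
  have fA: "finite A" using fin A by (rule finite_subset[rotated])
  have fH: "finite H" using finH[OF fin hg] .
  have ne: "\<forall>e\<in>H. e \<noteq> {}" using hg unfolding hypergraph_def by simp
  have s1: "gamma X H {x} = int (card {e\<in>H. e = {x}})" if "x \<in> A" for x
  proof -
    have "{x} \<subseteq> X" using that A by blast
    moreover have "{e\<in>H. e \<subseteq> {x}} = {e\<in>H. e = {x}}"
    proof (rule set_eqI)
      fix e show "e \<in> {e\<in>H. e \<subseteq> {x}} \<longleftrightarrow> e \<in> {e\<in>H. e = {x}}"
        using ne subset_singletonD by fastforce
    qed
    ultimately show ?thesis unfolding gamma_def by simp
  qed
  have eq: "{e\<in>H. e \<subseteq> A \<and> card e = 1} = (\<Union>x\<in>A. {e\<in>H. e = {x}})"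
  proof (rule set_eqI, rule iffI)
    fix e assume "e \<in> {e\<in>H. e \<subseteq> A \<and> card e = 1}"
    then have "e \<in> H" "e \<subseteq> A" "card e = 1" by simp_all
    then obtain x where "e = {x}" by (meson card_1_singletonE)
    then show "e \<in> (\<Union>x\<in>A. {e\<in>H. e = {x}})" using \<open>e \<in> H\<close> \<open>e \<subseteq> A\<close> by blast
  next
    fix e assume "e \<in> (\<Union>x\<in>A. {e\<in>H. e = {x}})"
    then obtain x where "x \<in> A" "e \<in> H" "e = {x}" by blast
    then show "e \<in> {e\<in>H. e \<subseteq> A \<and> card e = 1}" by simp
  qed
  have "card (\<Union>x\<in>A. {e\<in>H. e = {x}}) = (\<Sum>x\<in>A. card {e\<in>H. e = {x}})"
    by (rule card_UN_disjoint[OF fA]) (use fH in auto)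
  then have "int (card {e\<in>H. e \<subseteq> A \<and> card e = 1}) = (\<Sum>x\<in>A. int (card {e\<in>H. e = {x}}))"
    unfolding eq by simp
  also have "\<dots> = (\<Sum>x\<in>A. gamma X H {x})" using s1 by simp
  finally show ?thesis by simp
qed

lemma modular_part:
  assumes fin: "finite X" and hg: "hypergraph X H"
  shows "modular X (gamma X H) \<longleftrightarrow> (\<forall>e\<in>H. card e = 1)"
proof
  assume m: "modular X (gamma X H)"
  show "\<forall>e\<in>H. card e = 1"
  proof (rule ballI, rule ccontr)
    fix e assume eH: "e \<in> H" and c: "card e \<noteq> 1"
    have eX: "e \<subseteq> X" using hg eH unfolding hypergraph_def by simp
    have fH: "finite H" using finH[OF fin hg] .
    have "gamma X H e = (\<Sum>x\<in>e. gamma X H {x})" using m eX unfolding modular_def by simp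
    also have "\<dots> = int (card {e'\<in>H. e' \<subseteq> e \<and> card e' = 1})" by (rule single_sum[OF fin hg eX])
    finally have g: "gamma X H e = int (card {e'\<in>H. e' \<subseteq> e \<and> card e' = 1})" .
    have sub: "insert e {e'\<in>H. e' \<subseteq> e \<and> card e' = 1} \<subseteq> {e'\<in>H. e' \<subseteq> e}" using eH by blast
    have nin: "e \<notin> {e'\<in>H. e' \<subseteq> e \<and> card e' = 1}" using c by simp
    have "card (insert e {e'\<in>H. e' \<subseteq> e \<and> card e' = 1}) \<le> card {e'\<in>H. e' \<subseteq> e}"
      by (rule card_mono) (use fH sub in simp_all)
    then have "Suc (card {e'\<in>H. e' \<subseteq> e \<and> card e' = 1}) \<le> card {e'\<in>H. e' \<subseteq> e}"
      using nin fH by simp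
    moreover have "gamma X H e = int (card {e'\<in>H. e' \<subseteq> e})" using eX unfolding gamma_def by simp
    ultimately show False using g by linarith
  qed
next
  assume a: "\<forall>e\<in>H. card e = 1"
  show "modular X (gamma X H)"
    unfolding modular_def
  proof (intro allI impI)
    fix A assume A: "A \<subseteq> X"
    have "{e\<in>H. e \<subseteq> A \<and> card e = 1} = {e\<in>H. e \<subseteq> A}" using a by auto
    then have "(\<Sum>x\<in>A. gamma X H {x}) = int (card {e\<in>H. e \<subseteq> A})"
      using single_sum[OF fin hg A] by simp
    then show "gamma X H A = (\<Sum>x\<in>A. gamma X H {x})" using A unfolding gamma_def by simp
  qed
qed

theorem proposition4p16:
  fixes X :: "'a set" and H :: "'a set set"
  assumes "finite X" and "hypergraph X H"
  shows "inj_on (gamma X) {E. hypergraph X E}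
    \<and> gamma X H \<in> Bool X
    \<and> rigid X (gamma X H)
    \<and> (\<forall>Y G K. finite Y \<and> X \<inter> Y = {} \<and> hypergraph X G \<and> hypergraph Y K \<longrightarrow>
          gamma (X \<union> Y) (G \<union> K) = star1 X Y (gamma X G) (gamma Y K))
    \<and> (\<forall>X'. X' \<subseteq> X \<longrightarrow> gamma X' {e\<in>H. e \<subseteq> X'} = restr (gamma X H) X')
    \<and> (modular X (gamma X H) \<longleftrightarrow> (\<forall>e\<in>H. card e = 1))"
proof (intro conjI allI impI)
  show "inj_on (gamma X) {E. hypergraph X E}"
  proof (rule inj_onI)
    fix E E' assume "E \<in> {E. hypergraph X E}" "E' \<in> {E. hypergraph X E}" "gamma X E = gamma X E'"
    then show "E = E'" using inj_gamma[OF assms(1)] by simp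
  qed
  show "gamma X H \<in> Bool X" by (rule bool_part[OF assms(2)])
  show "rigid X (gamma X H)" by (rule exists_decomp[OF assms])
  fix Y G K
  assume h: "finite Y \<and> X \<inter> Y = {} \<and> hypergraph X G \<and> hypergraph Y K"
  then show "gamma (X \<union> Y) (G \<union> K) = star1 X Y (gamma X G) (gamma Y K)"
    using star_part[OF assms(1)] by simp
next
  fix X' assume "X' \<subseteq> X"
  then show "gamma X' {e\<in>H. e \<subseteq> X'} = restr (gamma X H) X'" by (rule restr_part)
next
  show "modular X (gamma X H) \<longleftrightarrow> (\<forall>e\<in>H. card e = 1)" by (rule modular_part[OF assms])
qed

end
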